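(* Every LSGA net is a structural conflict net.
   Context: A Petri net $N=(S,T,F,M_0,\ell)$ has disjoint $S,T$, $F:(S\times T)\cup(T\times S)\to\mathbb N$, $M_0\in\mathbb N^S$, labelling $\ell$. ${}^\bullet x(y)=F(y,x)$, $x^\bullet(y)=F(x,y)$. For a finite nonempty multiset $G$ of transitions, $M[G\rangle M'$ iff ${}^\bullet G\le M$ and $M'=M-{}^\bullet G+G^\bullet$; $t\smile u$ iff $M[\{t\}+\{u\}\rangle$ for some reachable $M$. $N$ is a structural conflict net iff $t\smile u$ implies ${}^\bullet t\cap{}^\bullet u=\emptyset$. A component with interface is $(N,I,O)$ with $I,O\subseteq S$, $I\cap O=\emptyset$ and $o^\bullet=\emptyset$ for $o\in O$; it is sequential iff there is $Q\subseteq S\setminus(I\cup O)$ with $|{}^\bullet t\restriction Q|=|t^\bullet\restriction Q|=1$ for all $t\in T$ and $|M_0\restriction Q|=1$. For components $((S_k,T_k,F_k,M_{0k},\ell_k),I_k,O_k)$, $k\in K$, with $(S_k\cup T_k)\cap(S_l\cup T_l)=(I_k\cup O_k)\cap(I_l\cup O_l)$ and $I_k\cap I_l=\emptyset$ for $k\ne l$, the asynchronous parallel composition is $((\bigcup S_k,\bigcup T_k,\bigcup F_k,\sum M_{0k},\bigcup\ell_k),\bigcup I_k,\bigcup O_k\setminus\bigcup I_k)$. $N$ is an LSGA net iff $(N,I,O)$ equals the asynchronous parallel composition of some family of sequential components, for some $I,O$. *)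

theory Defs
  imports Main "HOL-Library.Multiset"
begin

text \<open>Places have type 's and transitions type 't, so S and T
  are automatically disjoint. The flow function F is split into
  pre s t = F(s,t) and post t s = F(t,s). Markings are functions 's => nat
  which are 0 outside the place set.\<close>

record ('s,'t,'l) pnet =
  places :: "'s set"
  trans  :: "'t set"
  pre    :: "'s \<Rightarrow> 't \<Rightarrow> nat"
  post   :: "'t \<Rightarrow> 's \<Rightarrow> nat"
  m0     :: "'s \<Rightarrow> nat"
  lab    :: "'t \<Rightarrow> 'l"

definition wf_net :: "('s,'t,'l) pnet \<Rightarrow> bool" where
  "wf_net N \<longleftrightarrow>
     (\<forall>s t. pre N s t \<noteq> 0 \<longrightarrow> s \<in> places N \<and> t \<in> trans N) \<and>
     (\<forall>t s. post N t s \<noteq> 0 \<longrightarrow> s \<in> places N \<and> t \<in> trans N) \<and>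
     (\<forall>s. m0 N s \<noteq> 0 \<longrightarrow> s \<in> places N)"

definition pre_ms :: "('s,'t,'l) pnet \<Rightarrow> 't multiset \<Rightarrow> 's \<Rightarrow> nat" where
  "pre_ms N G s = (\<Sum>t\<in>#G. pre N s t)"

definition post_ms :: "('s,'t,'l) pnet \<Rightarrow> 't multiset \<Rightarrow> 's \<Rightarrow> nat" where
  "post_ms N G s = (\<Sum>t\<in>#G. post N t s)"

definition fires :: "('s,'t,'l) pnet \<Rightarrow> ('s \<Rightarrow> nat) \<Rightarrow> 't multiset \<Rightarrow> ('s \<Rightarrow> nat) \<Rightarrow> bool" where
  "fires N M G M' \<longleftrightarrow>
     G \<noteq> {#} \<and> set_mset G \<subseteq> trans N \<and>
     (\<forall>s. pre_ms N G s \<le> M s) \<and>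
     M' = (\<lambda>s. M s - pre_ms N G s + post_ms N G s)"

inductive_set reachable :: "('s,'t,'l) pnet \<Rightarrow> ('s \<Rightarrow> nat) set" for N where
  init: "m0 N \<in> reachable N"
| step: "M \<in> reachable N \<Longrightarrow> fires N M G M' \<Longrightarrow> M' \<in> reachable N"

definition conc :: "('s,'t,'l) pnet \<Rightarrow> 't \<Rightarrow> 't \<Rightarrow> bool" where
  "conc N t u \<longleftrightarrow> (\<exists>M \<in> reachable N. \<exists>M'. fires N M ({#t#} + {#u#}) M')"

definition preset :: "('s,'t,'l) pnet \<Rightarrow> 't \<Rightarrow> 's set" where
  "preset N t = {s. pre N s t \<noteq> 0}"

definition structural_conflict_net :: "('s,'t,'l) pnet \<Rightarrow> bool" where
  "structural_conflict_net N \<longleftrightarrow>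
     (\<forall>t u. conc N t u \<longrightarrow> preset N t \<inter> preset N u = {})"

definition component :: "('s,'t,'l) pnet \<Rightarrow> 's set \<Rightarrow> 's set \<Rightarrow> bool" where
  "component N Inp Out \<longleftrightarrow> wf_net N \<and> Inp \<subseteq> places N \<and> Out \<subseteq> places N \<and> Inp \<inter> Out = {} \<and>
     (\<forall>p\<in>Out. \<forall>t. pre N p t = 0)"

definition size_restr_one :: "'s set \<Rightarrow> ('s \<Rightarrow> nat) \<Rightarrow> bool" where
  "size_restr_one Q f \<longleftrightarrow> (\<exists>q\<in>Q. f q = 1 \<and> (\<forall>q'\<in>Q. q' \<noteq> q \<longrightarrow> f q' = 0))"

definition sequential :: "('s,'t,'l) pnet \<Rightarrow> 's set \<Rightarrow> 's set \<Rightarrow> bool" where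
  "sequential N Inp Out \<longleftrightarrow> component N Inp Out \<and>
     (\<exists>Q. Q \<subseteq> places N - (Inp \<union> Out) \<and>
          (\<forall>t\<in>trans N. size_restr_one Q (\<lambda>s. pre N s t) \<and> size_restr_one Q (\<lambda>s. post N t s)) \<and>
          size_restr_one Q (m0 N))"

text \<open>Since places and transitions have different types, the condition
  (S_k u T_k) n (S_l u T_l) = (I_k u O_k) n (I_l u O_l) splits into a condition on
  places and disjointness of transition sets.\<close>
definition async_comp_eq ::
  "'k set \<Rightarrow> ('k \<Rightarrow> ('s,'t,'l) pnet) \<Rightarrow> ('k \<Rightarrow> 's set) \<Rightarrow> ('k \<Rightarrow> 's set) \<Rightarrow>
   ('s,'t,'l) pnet \<Rightarrow> 's set \<Rightarrow> 's set \<Rightarrow> bool" where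
  "async_comp_eq K C IC OC N Inp Out \<longleftrightarrow>
     (\<forall>k\<in>K. \<forall>l\<in>K. k \<noteq> l \<longrightarrow>
        places (C k) \<inter> places (C l) = (IC k \<union> OC k) \<inter> (IC l \<union> OC l) \<and>
        trans (C k) \<inter> trans (C l) = {} \<and>
        IC k \<inter> IC l = {}) \<and>
     (\<forall>s. finite {k\<in>K. m0 (C k) s \<noteq> 0}) \<and>
     places N = (\<Union>k\<in>K. places (C k)) \<and>
     trans N = (\<Union>k\<in>K. trans (C k)) \<and>
     (\<forall>s t. pre N s t = (\<Sum>k\<in>{k\<in>K. t \<in> trans (C k)}. pre (C k) s t)) \<and>
     (\<forall>t s. post N t s = (\<Sum>k\<in>{k\<in>K. t \<in> trans (C k)}. post (C k) t s)) \<and>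
     (\<forall>s. m0 N s = (\<Sum>k\<in>{k\<in>K. m0 (C k) s \<noteq> 0}. m0 (C k) s)) \<and>
     (\<forall>k\<in>K. \<forall>t\<in>trans (C k). lab N t = lab (C k) t) \<and>
     Inp = (\<Union>k\<in>K. IC k) \<and>
     Out = (\<Union>k\<in>K. OC k) - (\<Union>k\<in>K. IC k)"

definition LSGA_by ::
  "'k set \<Rightarrow> ('k \<Rightarrow> ('s,'t,'l) pnet) \<Rightarrow> ('k \<Rightarrow> 's set) \<Rightarrow> ('k \<Rightarrow> 's set) \<Rightarrow>
   ('s,'t,'l) pnet \<Rightarrow> 's set \<Rightarrow> 's set \<Rightarrow> bool" where
  "LSGA_by K C IC OC N Inp Out \<longleftrightarrow>
     (\<forall>k\<in>K. sequential (C k) (IC k) (OC k)) \<and> async_comp_eq K C IC OC N Inp Out"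

end

theory Submission
  imports Defs
begin

lemma pre_ms_add[simp]: "pre_ms N (add_mset t G) s = pre N s t + pre_ms N G s"
  by (simp add: pre_ms_def)
lemma post_ms_add[simp]: "post_ms N (add_mset t G) s = post N t s + post_ms N G s"
  by (simp add: post_ms_def)
lemma pre_ms_empty[simp]: "pre_ms N {#} s = 0"
  by (simp add: pre_ms_def)
lemma post_ms_empty[simp]: "post_ms N {#} s = 0"
  by (simp add: post_ms_def)

lemma pre_ms_zero: "(\<And>t. t \<in># G \<Longrightarrow> pre N s t = 0) \<Longrightarrow> pre_ms N G s = 0"
  by (induction G) auto
lemma post_ms_zero: "(\<And>t. t \<in># G \<Longrightarrow> post N t s = 0) \<Longrightarrow> post_ms N G s = 0"
  by (induction G) auto

theorem corollary4p14:
  fixes N :: "('s,'t,'l) pnet"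
    and K :: "'k set" and C :: "'k \<Rightarrow> ('s,'t,'l) pnet"
    and IC OC :: "'k \<Rightarrow> 's set" and Inp Out :: "'s set"
  assumes "LSGA_by K C IC OC N Inp Out"
  shows "structural_conflict_net N"
proof -
  have seq: "\<And>k. k \<in> K \<Longrightarrow> sequential (C k) (IC k) (OC k)"
    and ac: "async_comp_eq K C IC OC N Inp Out" using assms by (auto simp: LSGA_by_def)
  obtain disj0: "\<forall>k\<in>K. \<forall>l\<in>K. k \<noteq> l \<longrightarrow>
        places (C k) \<inter> places (C l) = (IC k \<union> OC k) \<inter> (IC l \<union> OC l) \<and>
        trans (C k) \<inter> trans (C l) = {} \<and> IC k \<inter> IC l = {}"
    and fin: "\<forall>s. finite {k\<in>K. m0 (C k) s \<noteq> 0}"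
    and plN: "places N = (\<Union>k\<in>K. places (C k))"
    and transN: "trans N = (\<Union>k\<in>K. trans (C k))"
    and preN0: "\<forall>s t. pre N s t = (\<Sum>k\<in>{k\<in>K. t \<in> trans (C k)}. pre (C k) s t)"
    and postN0: "\<forall>t s. post N t s = (\<Sum>k\<in>{k\<in>K. t \<in> trans (C k)}. post (C k) t s)"
    and m0N0: "\<forall>s. m0 N s = (\<Sum>k\<in>{k\<in>K. m0 (C k) s \<noteq> 0}. m0 (C k) s)"
    and lb: "\<forall>k\<in>K. \<forall>t\<in>trans (C k). lab N t = lab (C k) t"
    and inpd: "Inp = (\<Union>k\<in>K. IC k)"
    and outd: "Out = (\<Union>k\<in>K. OC k) - (\<Union>k\<in>K. IC k)"
    using ac unfolding async_comp_eq_def by (elim conjE) (rule that; assumption)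
  have disj: "\<And>k l. k \<in> K \<Longrightarrow> l \<in> K \<Longrightarrow> k \<noteq> l \<Longrightarrow>
        places (C k) \<inter> places (C l) = (IC k \<union> OC k) \<inter> (IC l \<union> OC l) \<and>
        trans (C k) \<inter> trans (C l) = {} \<and> IC k \<inter> IC l = {}"
    by (rule disj0[rule_format])
  have preN: "\<And>s t. pre N s t = (\<Sum>k\<in>{k\<in>K. t \<in> trans (C k)}. pre (C k) s t)"
    using preN0 by (rule spec2)
  have postN: "\<And>s t. post N t s = (\<Sum>k\<in>{k\<in>K. t \<in> trans (C k)}. post (C k) t s)"
    using postN0 by (rule spec2)
  have m0N: "\<And>s. m0 N s = (\<Sum>k\<in>{k\<in>K. m0 (C k) s \<noteq> 0}. m0 (C k) s)"
    using m0N0 by (rule spec)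
  have comp: "\<And>k. k \<in> K \<Longrightarrow> component (C k) (IC k) (OC k)"
    using seq by (simp add: sequential_def)
  have wf: "\<And>k. k \<in> K \<Longrightarrow> wf_net (C k)" using comp by (simp add: component_def)
  have only: "\<And>k t. k \<in> K \<Longrightarrow> t \<in> trans (C k) \<Longrightarrow> {k\<in>K. t \<in> trans (C k)} = {k}"
    using disj by blast
  have preK: "\<And>k t s. k \<in> K \<Longrightarrow> t \<in> trans (C k) \<Longrightarrow> pre N s t = pre (C k) s t"
    using only preN by simp
  have postK: "\<And>k t s. k \<in> K \<Longrightarrow> t \<in> trans (C k) \<Longrightarrow> post N t s = post (C k) t s"
    using only postN by simp
  define P where "P k Q \<longleftrightarrow> Q \<subseteq> places (C k) - (IC k \<union> OC k) \<and>
          (\<forall>t\<in>trans (C k). size_restr_one Q (\<lambda>s. pre (C k) s t) \<and> size_restr_one Q (\<lambda>s. post (C k) t s)) \<and>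
          size_restr_one Q (m0 (C k))" for k Q
  define Q where "Q k = (SOME Q. P k Q)" for k
  have PQ: "\<And>k. k \<in> K \<Longrightarrow> P k (Q k)"
    unfolding Q_def by (rule someI_ex) (use seq in \<open>auto simp: sequential_def P_def\<close>)
  have Qsub: "\<And>k. k \<in> K \<Longrightarrow> Q k \<subseteq> places (C k) - (IC k \<union> OC k)" using PQ P_def by blast
  have Qpre: "\<And>k t. k \<in> K \<Longrightarrow> t \<in> trans (C k) \<Longrightarrow> size_restr_one (Q k) (\<lambda>s. pre N s t)"
    using PQ P_def preK by auto
  have Qpost: "\<And>k t. k \<in> K \<Longrightarrow> t \<in> trans (C k) \<Longrightarrow> size_restr_one (Q k) (\<lambda>s. post N t s)"
    using PQ P_def postK by auto
  have other: "pre N q t = 0 \<and> post N t q = 0"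
    if k: "k \<in> K" and q: "q \<in> Q k" and t: "t \<in> trans N" and nt: "t \<notin> trans (C k)" for k q t
  proof -
    obtain j where j: "j \<in> K" "t \<in> trans (C j)" using t transN by auto
    have jk: "j \<noteq> k" using j nt by auto
    have "q \<notin> places (C j)"
      using disj[OF k j(1) jk[symmetric]] Qsub[OF k] q by blast
    have w: "\<forall>s t. pre (C j) s t \<noteq> 0 \<longrightarrow> s \<in> places (C j)"
      "\<forall>t s. post (C j) t s \<noteq> 0 \<longrightarrow> s \<in> places (C j)"
      using wf[OF j(1)] unfolding wf_net_def by blast+
    have "pre (C j) q t = 0" using w(1) \<open>q \<notin> places (C j)\<close> by blast
    moreover have "post (C j) t q = 0" using w(2) \<open>q \<notin> places (C j)\<close> by blast
    ultimately show ?thesis using preK[OF j] postK[OF j] by simp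
  qed
  have m0Q: "m0 N q = m0 (C k) q" if k: "k \<in> K" and q: "q \<in> Q k" for k q
  proof -
    have "{j\<in>K. m0 (C j) q \<noteq> 0} \<subseteq> {k}"
    proof
      fix j assume "j \<in> {j\<in>K. m0 (C j) q \<noteq> 0}"
      hence j: "j \<in> K" "m0 (C j) q \<noteq> 0" by auto
      have "q \<in> places (C j)" using wf[OF j(1)] j(2) unfolding wf_net_def by blast
      moreover have "q \<in> places (C k) - (IC k \<union> OC k)" using Qsub[OF k] q by blast
      ultimately show "j \<in> {k}" using disj[OF k j(1)] by blast
    qed
    hence "{j\<in>K. m0 (C j) q \<noteq> 0} = {} \<or> {j\<in>K. m0 (C j) q \<noteq> 0} = {k}" by blast
    then show ?thesis using m0N[of q] k by auto
  qed
  have key: False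
    if k: "k \<in> K" and M: "size_restr_one (Q k) M" and t1: "t1 \<in> trans (C k)"
      and t2: "t2 \<in> trans (C k)" and en: "\<forall>s. pre_ms N (add_mset t1 (add_mset t2 G)) s \<le> M s"
    for k M t1 t2 G
  proof -
    obtain q0 where q0: "q0 \<in> Q k" "M q0 = 1" "\<forall>q'\<in>Q k. q' \<noteq> q0 \<longrightarrow> M q' = 0"
      using M unfolding size_restr_one_def by blast
    obtain a where a: "a \<in> Q k" "pre N a t1 = 1" using Qpre[OF k t1] unfolding size_restr_one_def by blast
    obtain b where b: "b \<in> Q k" "pre N b t2 = 1" using Qpre[OF k t2] unfolding size_restr_one_def by blast
    have "M a \<ge> 1" using en[rule_format, of a] a by simp
    hence "a = q0" using q0 a by force
    have "M b \<ge> 1" using en[rule_format, of b] b by simp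
    hence "b = q0" using q0 b by force
    have "pre_ms N (add_mset t1 (add_mset t2 G)) q0 \<ge> 2"
      using a b \<open>a = q0\<close> \<open>b = q0\<close> by simp
    then show False using en[rule_format, of q0] q0 by simp
  qed
  have inv: "\<forall>k\<in>K. size_restr_one (Q k) M" if "M \<in> reachable N" for M
    using that
  proof induction
    case init
    show ?case
    proof
      fix k assume k: "k \<in> K"
      have "size_restr_one (Q k) (m0 (C k))" using PQ[OF k] P_def by blast
      then show "size_restr_one (Q k) (m0 N)"
        unfolding size_restr_one_def using m0Q[OF k] by auto
    qed
  next
    case (step M G M')
    show ?case
    proof
      fix k assume k: "k \<in> K"
      have Mk: "size_restr_one (Q k) M" using step k by blast
      have GN: "set_mset G \<subseteq> trans N" and en: "\<forall>s. pre_ms N G s \<le> M s"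
        and M': "M' = (\<lambda>s. M s - pre_ms N G s + post_ms N G s)"
        using step(2) unfolding fires_def by auto
      show "size_restr_one (Q k) M'"
      proof (cases "\<exists>t\<in>#G. t \<in> trans (C k)")
        case False
        have "\<forall>q\<in>Q k. M' q = M q"
        proof
          fix q assume q: "q \<in> Q k"
          have "pre_ms N G q = 0" by (rule pre_ms_zero) (use other[OF k q] GN False in blast)
          moreover have "post_ms N G q = 0" by (rule post_ms_zero) (use other[OF k q] GN False in blast)
          ultimately show "M' q = M q" using M' by simp
        qed
        then show ?thesis using Mk unfolding size_restr_one_def by auto
      next
        case True
        then obtain t where t: "t \<in># G" "t \<in> trans (C k)" by blast
        obtain G' where G: "G = add_mset t G'" using t(1) by (metis mset_add)
        have G'n: "\<forall>u\<in>#G'. u \<notin> trans (C k)"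
        proof
          fix u assume u: "u \<in># G'"
          show "u \<notin> trans (C k)"
          proof
            assume uk: "u \<in> trans (C k)"
            obtain G'' where "G' = add_mset u G''" using u by (metis mset_add)
            then show False using key[OF k Mk t(2) uk, of G''] en G by simp
          qed
        qed
        have GN': "set_mset G' \<subseteq> trans N" using GN G by auto
        have M'q: "M' q = M q - pre N q t + post N t q" if q: "q \<in> Q k" for q
        proof -
          have "pre_ms N G' q = 0" by (rule pre_ms_zero) (use other[OF k q] GN' G'n in blast)
          moreover have "post_ms N G' q = 0" by (rule post_ms_zero) (use other[OF k q] GN' G'n in blast)
          ultimately show ?thesis using M' G by simp
        qed
        obtain q0 where q0: "q0 \<in> Q k" "M q0 = 1" "\<forall>q'\<in>Q k. q' \<noteq> q0 \<longrightarrow> M q' = 0"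
          using Mk unfolding size_restr_one_def by blast
        obtain a where a: "a \<in> Q k" "pre N a t = 1" "\<forall>q'\<in>Q k. q' \<noteq> a \<longrightarrow> pre N q' t = 0"
          using Qpre[OF k t(2)] unfolding size_restr_one_def by blast
        obtain b where b: "b \<in> Q k" "post N t b = 1" "\<forall>q'\<in>Q k. q' \<noteq> b \<longrightarrow> post N t q' = 0"
          using Qpost[OF k t(2)] unfolding size_restr_one_def by blast
        have "M a \<ge> 1" using en[rule_format, of a] a G by simp
        hence aq: "a = q0" using q0 a by force
        have "\<forall>q\<in>Q k. M' q = post N t q"
        proof
          fix q assume q: "q \<in> Q k"
          show "M' q = post N t q"
            using M'q[OF q] q0 a aq q by (cases "q = q0") auto
        qed
        then show ?thesis using b unfolding size_restr_one_def by auto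
      qed
    qed
  qed
  show ?thesis unfolding structural_conflict_net_def
  proof (intro allI impI)
    fix t u assume "conc N t u"
    then obtain M M' where M: "M \<in> reachable N" and f: "fires N M ({#t#} + {#u#}) M'"
      unfolding conc_def by blast
    have tu: "t \<in> trans N" "u \<in> trans N" and en: "\<forall>s. pre_ms N (add_mset t (add_mset u {#})) s \<le> M s"
      using f unfolding fires_def by (auto simp: add.commute)
    obtain k where k: "k \<in> K" "t \<in> trans (C k)" using tu transN by auto
    obtain l where l: "l \<in> K" "u \<in> trans (C l)" using tu transN by auto
    show "preset N t \<inter> preset N u = {}"
    proof (cases "k = l")
      case True
      have "size_restr_one (Q k) M" using inv[OF M] k(1) by blast
      moreover have "u \<in> trans (C k)" using l True by simp
      ultimately have False using key[OF k(1) _ k(2) _ en] by blast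
      then show ?thesis ..
    next
      case False
      show ?thesis
      proof (rule ccontr)
        assume "preset N t \<inter> preset N u \<noteq> {}"
        then obtain s where s: "pre N s t \<noteq> 0" "pre N s u \<noteq> 0" unfolding preset_def by blast
        have sk: "s \<in> places (C k)" "pre (C k) s t \<noteq> 0"
          using s preK[OF k] wf[OF k(1)] unfolding wf_net_def by auto
        have sl: "s \<in> places (C l)" "pre (C l) s u \<noteq> 0"
          using s preK[OF l] wf[OF l(1)] unfolding wf_net_def by auto
        have "s \<notin> OC k" using comp[OF k(1)] sk(2) unfolding component_def by auto
        moreover have "s \<notin> OC l" using comp[OF l(1)] sl(2) unfolding component_def by auto
        ultimately show False using disj[OF k(1) l(1) False] sk sl by blast
      qed
    qed
  qed
qed

end
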